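(* Let $P$ be a finite poset and $R$ a commutative unital ring. If $D$ is a derivation of $I^3(P,R)$, then $D=0$.
   Context: For a finite poset $P$, let $P^3_\le=\{(x,y,z)\in P^3: x\le y\le z\}$. The third partial flag incidence algebra $I^3(P,R)$ is the $R$-module of all functions $f:P^3_\le\to R$ (pointwise operations) with the (non-associative) multiplication $(fg)(x_1,x_2,x_3)=\sum f(x_1,y_1,y_2)\,g(y_1,y_2,x_3)$, the sum over all $y_1,y_2$ with $x_1\le y_1\le x_2\le y_2\le x_3$. A derivation of $I^3(P,R)$ is an $R$-linear map $D:I^3(P,R)\to I^3(P,R)$ such that $D(fg)=D(f)g+fD(g)$ for all $f,g$. *)

theory Defs
  imports Main
begin

text \<open>An element of the third partial flag incidence algebra
I^3(P,R) is a function on P^3_le; we represent it by a function of three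
arguments that vanishes outside P^3_le.\<close>

definition chain3 :: "'a::order \<Rightarrow> 'a \<Rightarrow> 'a \<Rightarrow> bool" where
  "chain3 x y z \<longleftrightarrow> x \<le> y \<and> y \<le> z"

definition I3 :: "('a::{finite,order} \<Rightarrow> 'a \<Rightarrow> 'a \<Rightarrow> 'r::comm_ring_1) set" where
  "I3 = {f. \<forall>x y z. \<not> chain3 x y z \<longrightarrow> f x y z = 0}"

definition I3_mult ::
  "('a::{finite,order} \<Rightarrow> 'a \<Rightarrow> 'a \<Rightarrow> 'r::comm_ring_1) \<Rightarrow> ('a \<Rightarrow> 'a \<Rightarrow> 'a \<Rightarrow> 'r)
     \<Rightarrow> ('a \<Rightarrow> 'a \<Rightarrow> 'a \<Rightarrow> 'r)" where
  "I3_mult f g = (\<lambda>x1 x2 x3. if chain3 x1 x2 x3 then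
      (\<Sum>(y1, y2) \<in> {(y1, y2). x1 \<le> y1 \<and> y1 \<le> x2 \<and> x2 \<le> y2 \<and> y2 \<le> x3}.
          f x1 y1 y2 * g y1 y2 x3)
    else 0)"

definition I3_derivation ::
  "(('a::{finite,order} \<Rightarrow> 'a \<Rightarrow> 'a \<Rightarrow> 'r::comm_ring_1) \<Rightarrow> ('a \<Rightarrow> 'a \<Rightarrow> 'a \<Rightarrow> 'r)) \<Rightarrow> bool" where
  "I3_derivation D \<longleftrightarrow>
     (\<forall>f \<in> I3. D f \<in> I3) \<and>
     (\<forall>f \<in> I3. \<forall>g \<in> I3. D (\<lambda>x y z. f x y z + g x y z) = (\<lambda>x y z. D f x y z + D g x y z)) \<and>
     (\<forall>c. \<forall>f \<in> I3. D (\<lambda>x y z. c * f x y z) = (\<lambda>x y z. c * D f x y z)) \<and>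
     (\<forall>f \<in> I3. \<forall>g \<in> I3. D (I3_mult f g) = (\<lambda>x y z. I3_mult (D f) g x y z + I3_mult f (D g) x y z))"

end

theory Submission
  imports Defs
begin

definition Eb :: "'a::{finite,order} \<Rightarrow> 'a \<Rightarrow> 'a \<Rightarrow> ('a \<Rightarrow> 'a \<Rightarrow> 'a \<Rightarrow> 'r::comm_ring_1)" where
  "Eb a b c = (\<lambda>x y z. if x = a \<and> y = b \<and> z = c then 1 else 0)"

lemma Eb_I3: "chain3 a b c \<Longrightarrow> Eb a b c \<in> I3"
  unfolding I3_def Eb_def by auto

lemma mult_I3: "I3_mult f g \<in> I3"
  unfolding I3_def I3_mult_def by auto

lemma mult_E_left:
  "I3_mult (Eb p q r) h = (\<lambda>x1 x2 x3. if chain3 x1 x2 x3 \<and> x1 = p \<and> x1 \<le> q \<and> q \<le> x2 \<and> x2 \<le> r \<and> r \<le> x3 then h q r x3 else 0)"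
proof (intro ext)
  fix x1 x2 x3 :: 'a
  let ?S = "{(y1, y2). x1 \<le> y1 \<and> y1 \<le> x2 \<and> x2 \<le> y2 \<and> y2 \<le> x3}"
  have "(\<Sum>(y1, y2) \<in> ?S. Eb p q r x1 y1 y2 * h y1 y2 x3) = (\<Sum>y\<in>?S. if y = (q,r) then (if x1 = p then h q r x3 else 0) else 0)"
    by (rule sum.cong) (auto simp: Eb_def split: if_splits)
  also have "\<dots> = (if (q,r) \<in> ?S then (if x1 = p then h q r x3 else 0) else 0)"
    by (simp add: sum.delta)
  finally show "I3_mult (Eb p q r) h x1 x2 x3 = (if chain3 x1 x2 x3 \<and> x1 = p \<and> x1 \<le> q \<and> q \<le> x2 \<and> x2 \<le> r \<and> r \<le> x3 then h q r x3 else 0)"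
    unfolding I3_mult_def by auto
qed

lemma mult_E_right:
  "I3_mult h (Eb p q r) = (\<lambda>x1 x2 x3. if chain3 x1 x2 x3 \<and> x3 = r \<and> x1 \<le> p \<and> p \<le> x2 \<and> x2 \<le> q \<and> q \<le> x3 then h x1 p q else 0)"
proof (intro ext)
  fix x1 x2 x3 :: 'a
  let ?S = "{(y1, y2). x1 \<le> y1 \<and> y1 \<le> x2 \<and> x2 \<le> y2 \<and> y2 \<le> x3}"
  have "(\<Sum>(y1, y2) \<in> ?S. h x1 y1 y2 * Eb p q r y1 y2 x3) = (\<Sum>y\<in>?S. if y = (p,q) then (if x3 = r then h x1 p q else 0) else 0)"
    by (rule sum.cong) (auto simp: Eb_def split: if_splits)
  also have "\<dots> = (if (p,q) \<in> ?S then (if x3 = r then h x1 p q else 0) else 0)"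
    by (simp add: sum.delta)
  finally show "I3_mult h (Eb p q r) x1 x2 x3 = (if chain3 x1 x2 x3 \<and> x3 = r \<and> x1 \<le> p \<and> p \<le> x2 \<and> x2 \<le> q \<and> q \<le> x3 then h x1 p q else 0)"
    unfolding I3_mult_def by auto
qed

lemma mult_zero_right: "I3_mult f (\<lambda>x y z. 0) = (\<lambda>x y z. 0)"
  unfolding I3_mult_def by (simp add: fun_eq_iff)

lemma mult_zero_left: "I3_mult (\<lambda>x y z. 0) f = (\<lambda>x y z. 0)"
  unfolding I3_mult_def by (simp add: fun_eq_iff)

lemma D_zero:
  fixes D :: "('a::{finite,order} \<Rightarrow> 'a \<Rightarrow> 'a \<Rightarrow> 'r::comm_ring_1) \<Rightarrow> ('a \<Rightarrow> 'a \<Rightarrow> 'a \<Rightarrow> 'r)"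
  assumes d: "I3_derivation D"
  shows "D (\<lambda>x y z. 0) = (\<lambda>x y z. 0)"
proof -
  have z: "(\<lambda>x y z. 0) \<in> I3" unfolding I3_def by auto
  have "\<forall>c. \<forall>f\<in>I3. D (\<lambda>x y z. c * f x y z) = (\<lambda>x y z. c * D f x y z)"
    using d unfolding I3_derivation_def by blast
  from bspec[OF spec[OF this, of 0] z] show ?thesis by simp
qed

lemma D_I3: "I3_derivation D \<Longrightarrow> f \<in> I3 \<Longrightarrow> D f \<in> I3"
  unfolding I3_derivation_def by blast

lemma D_leib: "I3_derivation D \<Longrightarrow> f \<in> I3 \<Longrightarrow> g \<in> I3 \<Longrightarrow>
   D (I3_mult f g) x y z = I3_mult (D f) g x y z + I3_mult f (D g) x y z"
  unfolding I3_derivation_def by metis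

lemma I3_zero: "h \<in> I3 \<Longrightarrow> \<not> chain3 x y z \<Longrightarrow> h x y z = 0"
  unfolding I3_def by blast

lemma D_leib0:
  fixes D :: "('a::{finite,order} \<Rightarrow> 'a \<Rightarrow> 'a \<Rightarrow> 'r::comm_ring_1) \<Rightarrow> ('a \<Rightarrow> 'a \<Rightarrow> 'a \<Rightarrow> 'r)"
  assumes d: "I3_derivation D" and f: "f \<in> I3" and g: "g \<in> I3" and z: "I3_mult f g = (\<lambda>x y z. 0)"
  shows "I3_mult (D f) g x y z + I3_mult f (D g) x y z = 0"
  using D_leib[OF d f g, of x y z] D_zero[OF d] z by simp

lemma D_Eaaa:
  fixes D :: "('a::{finite,order} \<Rightarrow> 'a \<Rightarrow> 'a \<Rightarrow> 'r::comm_ring_1) \<Rightarrow> ('a \<Rightarrow> 'a \<Rightarrow> 'a \<Rightarrow> 'r)"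
  assumes d: "I3_derivation D"
  shows "D (Eb a a a) = (\<lambda>x y z. 0)"
proof -
  define h where "h = D (Eb a a a)"
  have ea: "Eb a a a \<in> I3" by (rule Eb_I3) (simp add: chain3_def)
  have hI: "h \<in> I3" unfolding h_def by (rule D_I3[OF d ea])
  have sq: "I3_mult (Eb a a a) (Eb a a a) = Eb a a a"
    unfolding mult_E_left by (auto simp: Eb_def chain3_def fun_eq_iff)
  have eq1: "h x y z = I3_mult h (Eb a a a) x y z + I3_mult (Eb a a a) h x y z" for x y z
    using D_leib[OF d ea ea, of x y z] unfolding sq h_def by simp
  have eq2: "h a a b = 0" if ab: "a < b" for b
  proof -
    have eb: "Eb a b b \<in> I3" by (rule Eb_I3) (use ab in \<open>simp add: chain3_def\<close>)
    have "I3_mult (Eb a a a) (Eb a b b) = (\<lambda>x y z. 0)"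
      using ab unfolding mult_E_left by (auto simp: Eb_def chain3_def fun_eq_iff)
    from D_leib0[OF d ea eb this, of a b b] show ?thesis
      using ab by (simp add: mult_E_left mult_E_right chain3_def h_def less_le_not_le)
  qed
  have eq3: "h x a a = 0" if xa: "x < a" for x
  proof -
    have eb: "Eb x x a \<in> I3" by (rule Eb_I3) (use xa in \<open>simp add: chain3_def\<close>)
    have "I3_mult (Eb x x a) (Eb a a a) = (\<lambda>x y z. 0)"
      using xa unfolding mult_E_left by (auto simp: Eb_def chain3_def fun_eq_iff)
    from D_leib0[OF d eb ea this, of x x a] show ?thesis
      using xa by (simp add: mult_E_left mult_E_right chain3_def h_def less_le_not_le)
  qed
  have eq4: "h a a a = 0"
    using eq1[of a a a] by (simp add: mult_E_left mult_E_right chain3_def)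
  have "h x y z = 0" for x y z
  proof (cases "chain3 x y z")
    case False then show ?thesis using I3_zero[OF hI] by blast
  next
    case True
    show ?thesis
      using eq1[of x y z] True eq2[of z] eq3[of x] eq4
      by (auto simp: mult_E_left mult_E_right chain3_def less_le)
  qed
  then show ?thesis unfolding h_def by (simp add: fun_eq_iff)
qed


lemma D_R:
  fixes D :: "('a::{finite,order} \<Rightarrow> 'a \<Rightarrow> 'a \<Rightarrow> 'r::comm_ring_1) \<Rightarrow> ('a \<Rightarrow> 'a \<Rightarrow> 'a \<Rightarrow> 'r)"
  assumes d: "I3_derivation D" and f: "f \<in> I3"
  shows "D (I3_mult f (Eb c c c)) = I3_mult (D f) (Eb c c c)"
proof -
  have ec: "Eb c c c \<in> I3" by (rule Eb_I3) (simp add: chain3_def)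
  show ?thesis using D_leib[OF d f ec] D_Eaaa[OF d, of c] mult_zero_right
    by (simp add: fun_eq_iff)
qed

lemma D_L:
  fixes D :: "('a::{finite,order} \<Rightarrow> 'a \<Rightarrow> 'a \<Rightarrow> 'r::comm_ring_1) \<Rightarrow> ('a \<Rightarrow> 'a \<Rightarrow> 'a \<Rightarrow> 'r)"
  assumes d: "I3_derivation D" and f: "f \<in> I3"
  shows "D (I3_mult (Eb c c c) f) = I3_mult (Eb c c c) (D f)"
proof -
  have ec: "Eb c c c \<in> I3" by (rule Eb_I3) (simp add: chain3_def)
  show ?thesis using D_leib[OF d ec f] D_Eaaa[OF d, of c] mult_zero_left
    by (simp add: fun_eq_iff)
qed

lemma D_Eaab_supp:
  fixes D :: "('a::{finite,order} \<Rightarrow> 'a \<Rightarrow> 'a \<Rightarrow> 'r::comm_ring_1) \<Rightarrow> ('a \<Rightarrow> 'a \<Rightarrow> 'a \<Rightarrow> 'r)"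
  assumes d: "I3_derivation D" and ab: "a \<le> b"
  shows "D (Eb a a b) = I3_mult (Eb a a a) (D (Eb a a b))"
proof -
  have e: "Eb a a b \<in> I3" by (rule Eb_I3) (use ab in \<open>simp add: chain3_def\<close>)
  have eq: "I3_mult (Eb a a a) (Eb a a b) = Eb a a b"
    unfolding mult_E_left using ab by (auto simp: Eb_def chain3_def fun_eq_iff)
  show ?thesis using D_L[OF d e, of a] unfolding eq .
qed

lemma D_Eabb_supp:
  fixes D :: "('a::{finite,order} \<Rightarrow> 'a \<Rightarrow> 'a \<Rightarrow> 'r::comm_ring_1) \<Rightarrow> ('a \<Rightarrow> 'a \<Rightarrow> 'a \<Rightarrow> 'r)"
  assumes d: "I3_derivation D" and ab: "a \<le> b"
  shows "D (Eb a b b) = I3_mult (D (Eb a b b)) (Eb b b b)"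
proof -
  have e: "Eb a b b \<in> I3" by (rule Eb_I3) (use ab in \<open>simp add: chain3_def\<close>)
  have eq: "I3_mult (Eb a b b) (Eb b b b) = Eb a b b"
    unfolding mult_E_right using ab by (auto simp: Eb_def chain3_def fun_eq_iff)
  show ?thesis using D_R[OF d e, of b] unfolding eq .
qed

lemma D_corner:
  fixes D :: "('a::{finite,order} \<Rightarrow> 'a \<Rightarrow> 'a \<Rightarrow> 'r::comm_ring_1) \<Rightarrow> ('a \<Rightarrow> 'a \<Rightarrow> 'a \<Rightarrow> 'r)"
  assumes d: "I3_derivation D" and ab: "a < b"
  shows "D (Eb a a b) a a b = 0" and "D (Eb a b b) a b b = 0"
proof -
  have e1: "Eb a a b \<in> I3" by (rule Eb_I3) (use ab in \<open>simp add: chain3_def\<close>)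
  have e2: "Eb a b b \<in> I3" by (rule Eb_I3) (use ab in \<open>simp add: chain3_def\<close>)
  define S :: "'a \<Rightarrow> 'a \<Rightarrow> 'a \<Rightarrow> 'r" where "S = I3_mult (Eb a a b) (Eb a b b)"
  have SI: "S \<in> I3" unfolding S_def by (rule mult_I3)
  have RS: "I3_mult S (Eb b b b) = Eb a b b"
    unfolding S_def mult_E_right mult_E_left using ab
    by (auto simp: Eb_def chain3_def fun_eq_iff less_le_not_le)
  have LS: "I3_mult (Eb a a a) S = Eb a a b"
    unfolding S_def mult_E_right mult_E_left using ab
    by (auto simp: Eb_def chain3_def fun_eq_iff less_le_not_le)
  have DS: "D S x y z = I3_mult (D (Eb a a b)) (Eb a b b) x y z + I3_mult (Eb a a b) (D (Eb a b b)) x y z" for x y z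
    unfolding S_def by (rule D_leib[OF d e1 e2])
  have k: "D (Eb a b b) = I3_mult (D S) (Eb b b b)"
    using D_R[OF d SI, of b] unfolding RS .
  have m: "D (Eb a a b) = I3_mult (Eb a a a) (D S)"
    using D_L[OF d SI, of a] unfolding LS .
  have 1: "D (Eb a b b) a b b = D (Eb a a b) a a b + D (Eb a b b) a b b"
    apply (subst k) using ab by (simp add: mult_E_right mult_E_left DS chain3_def less_le_not_le)
  then show "D (Eb a a b) a a b = 0" by simp
  have 2: "D (Eb a a b) a a b = D (Eb a a b) a a b + D (Eb a b b) a b b"
    apply (subst m) using ab by (simp add: mult_E_right mult_E_left DS chain3_def less_le_not_le)
  then show "D (Eb a b b) a b b = 0" by simp
qed


lemma D_Eabb:
  fixes D :: "('a::{finite,order} \<Rightarrow> 'a \<Rightarrow> 'a \<Rightarrow> 'r::comm_ring_1) \<Rightarrow> ('a \<Rightarrow> 'a \<Rightarrow> 'a \<Rightarrow> 'r)"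
  assumes d: "I3_derivation D" and ab: "a \<le> b"
  shows "D (Eb a b b) = (\<lambda>x y z. 0)"
proof (cases "a = b")
  case True then show ?thesis using D_Eaaa[OF d] by simp
next
  case False
  with ab have ab': "a < b" by simp
  have e2: "Eb a b b \<in> I3" by (rule Eb_I3) (use ab in \<open>simp add: chain3_def\<close>)
  have pt: "D (Eb a b b) x b b = 0" if xb: "x \<le> b" for x
  proof (cases "x = a")
    case True then show ?thesis using D_corner(2)[OF d ab'] by simp
  next
    case False
    have e1: "Eb x x b \<in> I3" by (rule Eb_I3) (use xb in \<open>simp add: chain3_def\<close>)
    have zz: "I3_mult (Eb x x b) (Eb a b b) = (\<lambda>x y z. 0)"
      unfolding mult_E_left using False by (auto simp: Eb_def fun_eq_iff)
    have nn: "\<not> (x \<le> a \<and> a \<le> x)" using False antisym[of x a] by blast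
    from D_leib0[OF d e1 e2 zz, of x x b] show ?thesis
      using xb nn by (simp add: mult_E_left mult_E_right chain3_def)
  qed
  have "D (Eb a b b) x y z = 0" for x y z
    using D_Eabb_supp[OF d ab] pt[of x]
    by (metis (no_types, lifting) mult_E_right chain3_def)
  then show ?thesis by (simp add: fun_eq_iff)
qed

lemma D_Eaab:
  fixes D :: "('a::{finite,order} \<Rightarrow> 'a \<Rightarrow> 'a \<Rightarrow> 'r::comm_ring_1) \<Rightarrow> ('a \<Rightarrow> 'a \<Rightarrow> 'a \<Rightarrow> 'r)"
  assumes d: "I3_derivation D" and ab: "a \<le> b"
  shows "D (Eb a a b) = (\<lambda>x y z. 0)"
proof (cases "a = b")
  case True then show ?thesis using D_Eaaa[OF d] by simp
next
  case False
  with ab have ab': "a < b" by simp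
  have e1: "Eb a a b \<in> I3" by (rule Eb_I3) (use ab in \<open>simp add: chain3_def\<close>)
  have pt: "D (Eb a a b) a a z = 0" if az: "a \<le> z" for z
  proof (cases "z = b")
    case True then show ?thesis using D_corner(1)[OF d ab'] by simp
  next
    case False
    have e2: "Eb a z z \<in> I3" by (rule Eb_I3) (use az in \<open>simp add: chain3_def\<close>)
    have zz: "I3_mult (Eb a a b) (Eb a z z) = (\<lambda>x y z. 0)"
      unfolding mult_E_left using False by (auto simp: Eb_def fun_eq_iff)
    have nn: "\<not> (z \<le> b \<and> b \<le> z)" using False antisym[of z b] by blast
    from D_leib0[OF d e1 e2 zz, of a z z] show ?thesis
      using az nn by (simp add: mult_E_left mult_E_right chain3_def)
  qed
  have "D (Eb a a b) x y z = 0" for x y z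
    using D_Eaab_supp[OF d ab] pt[of z]
    by (metis (no_types, lifting) mult_E_left chain3_def)
  then show ?thesis by (simp add: fun_eq_iff)
qed

lemma D_E:
  fixes D :: "('a::{finite,order} \<Rightarrow> 'a \<Rightarrow> 'a \<Rightarrow> 'r::comm_ring_1) \<Rightarrow> ('a \<Rightarrow> 'a \<Rightarrow> 'a \<Rightarrow> 'r)"
  assumes d: "I3_derivation D" and abc: "chain3 a b c"
  shows "D (Eb a b c) = (\<lambda>x y z. 0)"
proof -
  have ab: "a \<le> b" and bc: "b \<le> c" using abc by (auto simp: chain3_def)
  have e1: "Eb a b b \<in> I3" by (rule Eb_I3) (use ab in \<open>simp add: chain3_def\<close>)
  have e2: "Eb b b c \<in> I3" by (rule Eb_I3) (use bc in \<open>simp add: chain3_def\<close>)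
  have eq: "I3_mult (Eb a b b) (Eb b b c) = Eb a b c"
    unfolding mult_E_left using ab bc by (auto simp: Eb_def chain3_def fun_eq_iff)
  have "D (Eb a b c) x y z = 0" for x y z
    using D_leib[OF d e1 e2, of x y z] unfolding eq D_Eabb[OF d ab] D_Eaab[OF d bc]
    by (simp add: mult_zero_left mult_zero_right)
  then show ?thesis by (simp add: fun_eq_iff)
qed


lemma D_supp:
  fixes D :: "('a::{finite,order} \<Rightarrow> 'a \<Rightarrow> 'a \<Rightarrow> 'r::comm_ring_1) \<Rightarrow> ('a \<Rightarrow> 'a \<Rightarrow> 'a \<Rightarrow> 'r)"
  assumes d: "I3_derivation D" and S: "finite S"
  shows "\<forall>f\<in>I3. (\<forall>x y z. (x,y,z) \<notin> S \<longrightarrow> f x y z = 0) \<longrightarrow> D f = (\<lambda>x y z. 0)"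
  using S
proof (induction S rule: finite_induct)
  case empty
  show ?case
  proof (intro ballI impI)
    fix f :: "'a \<Rightarrow> 'a \<Rightarrow> 'a \<Rightarrow> 'r"
    assume "\<forall>x y z. (x, y, z) \<notin> {} \<longrightarrow> f x y z = 0"
    then have "f = (\<lambda>x y z. 0)" by (simp add: fun_eq_iff)
    then show "D f = (\<lambda>x y z. 0)" using D_zero[OF d] by simp
  qed
next
  case (insert t S)
  obtain a b c where t: "t = (a,b,c)" by (cases t) auto
  show ?case
  proof (intro ballI impI)
    fix f :: "'a \<Rightarrow> 'a \<Rightarrow> 'a \<Rightarrow> 'r"
    assume fI: "f \<in> I3" and fs: "\<forall>x y z. (x, y, z) \<notin> insert t S \<longrightarrow> f x y z = 0"
    define f' where "f' = (\<lambda>x y z. if (x,y,z) = (a,b,c) then 0 else f x y z)"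
    have f'I: "f' \<in> I3" using fI unfolding I3_def f'_def by auto
    have f's: "\<forall>x y z. (x, y, z) \<notin> S \<longrightarrow> f' x y z = 0"
      using fs t unfolding f'_def by auto
    have Df': "D f' = (\<lambda>x y z. 0)" using insert.IH f'I f's by blast
    show "D f = (\<lambda>x y z. 0)"
    proof (cases "chain3 a b c")
      case False
      then have "f a b c = 0" using I3_zero[OF fI] by blast
      then have "f = f'" unfolding f'_def by (auto simp: fun_eq_iff)
      then show ?thesis using Df' by simp
    next
      case True
      have eI: "Eb a b c \<in> I3" by (rule Eb_I3[OF True])
      define g where "g = (\<lambda>x y z. f a b c * Eb a b c x y z)"
      have gI: "g \<in> I3" using True unfolding g_def I3_def Eb_def chain3_def by auto
      have "\<forall>c. \<forall>f\<in>I3. D (\<lambda>x y z. c * f x y z) = (\<lambda>x y z. c * D f x y z)"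
        using d unfolding I3_derivation_def by blast
      from bspec[OF spec[OF this, of "f a b c"] eI]
      have Dg: "D g = (\<lambda>x y z. 0)" unfolding g_def using D_E[OF d True] by simp
      have "\<forall>f\<in>I3. \<forall>g\<in>I3. D (\<lambda>x y z. f x y z + g x y z) = (\<lambda>x y z. D f x y z + D g x y z)"
        using d unfolding I3_derivation_def by blast
      from bspec[OF bspec[OF this f'I] gI]
      have Dsum: "D (\<lambda>x y z. f' x y z + g x y z) = (\<lambda>x y z. 0)" using Df' Dg by simp
      have "f = (\<lambda>x y z. f' x y z + g x y z)"
        unfolding f'_def g_def Eb_def by (auto simp: fun_eq_iff)
      then show ?thesis using Dsum by simp
    qed
  qed
qed

theorem theorem4p7:
  fixes D :: "('a::{finite,order} \<Rightarrow> 'a \<Rightarrow> 'a \<Rightarrow> 'r::comm_ring_1) \<Rightarrow> ('a \<Rightarrow> 'a \<Rightarrow> 'a \<Rightarrow> 'r)"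
  assumes "I3_derivation D"
  shows "\<forall>f \<in> I3. D f = (\<lambda>x y z. 0)"
  using D_supp[OF assms, of UNIV] by simp

end
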